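(* Let $m\ge 1$ and $x\in RF(m)$. Then for every choice, for each $k\in\{1,\dots,m-1\}$, of one of the two forms $[\omega,x_k]$ or $[x_k,\omega]$, there exist integers $\alpha_1,\dots,\alpha_m$ and elements $\omega_1,\dots,\omega_{m-1}\in RF(m)$ such that $$x=x_m^{\alpha_m}x_{m-1}^{\alpha_{m-1}}\cdots x_1^{\alpha_1}\,z_1z_2\cdots z_{m-1},$$ where $z_k=[\omega_k,x_k]$ or $z_k=[x_k,\omega_k]$ according to the chosen form.
   Context: $RF(m)$ is the reduced free group on $x_1,\dots,x_m$: the quotient of the free group $F(x_1,\dots,x_m)$ by the relations that each $x_i$ commutes with every conjugate $\gamma x_i\gamma^{-1}$ of itself. Commutators are $[g,h]=g^{-1}h^{-1}gh$. *)

theory Defs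
  imports Main
begin

text \<open>Words in the generators x_i and their inverses: a letter (i, False) is x_i,
  a letter (i, True) is x_i^{-1}.  Elements of RF(m) are represented by words over
  the alphabet {1..m}, modulo the congruence rf_eq m defined below.\<close>

type_synonym word = "(nat \<times> bool) list"

definition alphabet :: "nat \<Rightarrow> word \<Rightarrow> bool" where
  "alphabet m w \<longleftrightarrow> (\<forall>(i, b) \<in> set w. 1 \<le> i \<and> i \<le> m)"

definition inv_word :: "word \<Rightarrow> word" where
  "inv_word w = rev (map (\<lambda>(i, b). (i, \<not> b)) w)"

definition gen :: "nat \<Rightarrow> word" where
  "gen i = [(i, False)]"

text \<open>The defining congruence of RF(m): free reduction, plus x_i commutes with
  every conjugate g x_i g^{-1}.\<close>

inductive rf_eq :: "nat \<Rightarrow> word \<Rightarrow> word \<Rightarrow> bool" for m :: nat where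
  rf_refl: "rf_eq m w w"
| rf_sym: "rf_eq m u v \<Longrightarrow> rf_eq m v u"
| rf_trans: "rf_eq m u v \<Longrightarrow> rf_eq m v w \<Longrightarrow> rf_eq m u w"
| rf_cancel: "alphabet m u \<Longrightarrow> alphabet m v \<Longrightarrow> 1 \<le> i \<Longrightarrow> i \<le> m \<Longrightarrow>
    rf_eq m (u @ [(i, b), (i, \<not> b)] @ v) (u @ v)"
| rf_rel: "alphabet m u \<Longrightarrow> alphabet m v \<Longrightarrow> alphabet m g \<Longrightarrow> 1 \<le> i \<Longrightarrow> i \<le> m \<Longrightarrow>
    rf_eq m (u @ gen i @ (g @ gen i @ inv_word g) @ v)
            (u @ (g @ gen i @ inv_word g) @ gen i @ v)"

definition gpow :: "nat \<Rightarrow> int \<Rightarrow> word" where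
  "gpow i a = (if 0 \<le> a then replicate (nat a) (i, False) else replicate (nat (- a)) (i, True))"

definition comm :: "word \<Rightarrow> word \<Rightarrow> word" where
  "comm g h = inv_word g @ inv_word h @ g @ h"

end

theory Submission
  imports Defs
begin
inductive rfx :: "word \<Rightarrow> word \<Rightarrow> bool" where
  x_refl: "rfx w w"
| x_sym: "rfx u v \<Longrightarrow> rfx v u"
| x_trans: "rfx u v \<Longrightarrow> rfx v w \<Longrightarrow> rfx u w"
| x_cancel: "rfx (u @ [(i, b), (i, \<not> b)] @ v) (u @ v)"
| x_rel: "rfx (u @ gen i @ (g @ gen i @ inv_word g) @ v) (u @ (g @ gen i @ inv_word g) @ gen i @ v)"

lemma rfx_equivp: "equivp rfx"
  by (rule equivpI) (auto simp: reflp_def symp_def transp_def intro: rfx.intros)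

lemma rfx_cong: "rfx u v \<Longrightarrow> rfx (p @ u @ q) (p @ v @ q)"
proof (induction rule: rfx.induct)
  case (x_cancel u i b v)
  show ?case using rfx.x_cancel[of "p @ u" i b "v @ q"] by simp
next
  case (x_rel u i g v)
  show ?case using rfx.x_rel[of "p @ u" i g "v @ q"] by simp
qed (auto intro: rfx.intros)

lemma rfx_congL: "rfx u v \<Longrightarrow> rfx (a @ u) (a @ v)"
  using rfx_cong[of u v a "[]"] by simp
lemma rfx_congR: "rfx u v \<Longrightarrow> rfx (u @ b) (v @ b)"
  using rfx_cong[of u v "[]" b] by simp

lemma inv_word_append[simp]: "inv_word (u @ v) = inv_word v @ inv_word u"
  by (simp add: inv_word_def)
lemma inv_word_Nil[simp]: "inv_word [] = []" by (simp add: inv_word_def)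
lemma inv_word_Cons[simp]: "inv_word (a # u) = inv_word u @ [(fst a, \<not> snd a)]"
  by (cases a) (simp add: inv_word_def)
lemma inv_word_inv[simp]: "inv_word (inv_word u) = u"
  by (induction u) auto

lemma rfx_rinv: "rfx (w @ inv_word w) []"
proof (induction w)
  case Nil then show ?case by (simp add: x_refl)
next
  case (Cons a w)
  obtain i b where a: "a = (i, b)" by (cases a)
  have "rfx ([(i, b)] @ (w @ inv_word w) @ [(i, \<not> b)]) ([(i, b)] @ [] @ [(i, \<not> b)])"
    by (rule rfx_cong[OF Cons])
  moreover have "rfx ([] @ [(i, b), (i, \<not> b)] @ []) ([] @ [])" by (rule x_cancel)
  ultimately show ?case using a by (auto intro: x_trans)
qed

lemma rfx_linv: "rfx (inv_word w @ w) []"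
  using rfx_rinv[of "inv_word w"] by simp

lemma rfx_inv_resp: "rfx u v \<Longrightarrow> rfx (inv_word u) (inv_word v)"
proof (induction rule: rfx.induct)
  case (x_cancel u i b v)
  show ?case using rfx.x_cancel[of "inv_word v" i b "inv_word u"] by simp
next
  case (x_rel u i g v)
  define x where "x = gen i"
  define c where "c = g @ gen i @ inv_word g"
  define L where "L = inv_word (x @ c)"
  define R where "R = inv_word (c @ x)"
  have 1: "rfx L (L @ (c @ x) @ R)"
    using rfx_congL[OF rfx_rinv[of "c @ x"], of L] unfolding R_def by (simp add: x_sym)
  have 2: "rfx (L @ (c @ x) @ R) (L @ (x @ c) @ R)"
    using rfx.x_rel[of L i g R] unfolding x_def c_def by (simp add: x_sym)
  have 3: "rfx (L @ (x @ c) @ R) R"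
    using rfx_congR[OF rfx_linv[of "x @ c"], of R] unfolding L_def by simp
  have "rfx L R" using 1 2 3 by (blast intro: x_trans)
  then have "rfx (inv_word v @ L @ inv_word u) (inv_word v @ R @ inv_word u)" by (rule rfx_cong)
  then show ?case unfolding L_def R_def x_def c_def by (simp add: gen_def)
qed (auto intro: rfx.intros)

quotient_type rfg = word / rfx
  by (rule rfx_equivp)

instantiation rfg :: group_add
begin
lift_definition zero_rfg :: rfg is "[]" .
lift_definition plus_rfg :: "rfg \<Rightarrow> rfg \<Rightarrow> rfg" is "(@)"
  by (metis rfx_congL rfx_congR x_trans)
lift_definition uminus_rfg :: "rfg \<Rightarrow> rfg" is inv_word
  by (rule rfx_inv_resp)
lift_definition minus_rfg :: "rfg \<Rightarrow> rfg \<Rightarrow> rfg" is "\<lambda>u v. u @ inv_word v"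
  by (metis rfx_congL rfx_congR x_trans rfx_inv_resp)
instance
proof
  fix a b c :: rfg
  show "a + b + c = a + (b + c)" by transfer (simp add: x_refl)
  show "0 + a = a" by transfer (simp add: x_refl)
  show "a + 0 = a" by transfer (simp add: x_refl)
  show "- a + a = 0" by transfer (rule rfx_linv)
  show "a + - b = a - b" by transfer (simp add: x_refl)
qed
end

definition delm :: "nat \<Rightarrow> word \<Rightarrow> word" where
  "delm m w = filter (\<lambda>(i, b). 1 \<le> i \<and> i \<le> m) w"

lemma alphabet_delm: "alphabet m (delm m w)"
  by (auto simp: alphabet_def delm_def)

lemma delm_id: "alphabet m w \<Longrightarrow> delm m w = w"
  by (auto simp: alphabet_def delm_def intro!: filter_True)

lemma delm_inv: "delm m (inv_word w) = inv_word (delm m w)"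
  by (induction w) (auto simp: delm_def)

lemma rfx_retract: "rfx u v \<Longrightarrow> rf_eq m (delm m u) (delm m v)"
proof (induction rule: rfx.induct)
  case (x_cancel u i b v)
  show ?case
  proof (cases "1 \<le> i \<and> i \<le> m")
    case True
    then show ?thesis
      using rf_cancel[of m "delm m u" "delm m v" i b] alphabet_delm
      by (simp add: delm_def)
  next
    case False then show ?thesis by (auto simp add: delm_def rf_refl)
  qed
next
  case (x_rel u i g v)
  show ?case
  proof (cases "1 \<le> i \<and> i \<le> m")
    case True
    have dg: "delm m (gen i) = gen i" using True by (simp add: delm_def gen_def)
    have "rf_eq m (delm m u @ gen i @ (delm m g @ gen i @ inv_word (delm m g)) @ delm m v)
            (delm m u @ (delm m g @ gen i @ inv_word (delm m g)) @ gen i @ delm m v)"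
      using rf_rel[of m "delm m u" "delm m v" "delm m g" i] alphabet_delm True by blast
    moreover have "\<And>a b. delm m (a @ b) = delm m a @ delm m b" by (simp add: delm_def)
    ultimately show ?thesis using dg by (simp add: delm_inv)
  next
    case False
    have dg: "delm m (gen i) = []" using False by (simp add: delm_def gen_def)
    have "\<And>a b. delm m (a @ b) = delm m a @ delm m b" by (simp add: delm_def)
    then show ?thesis using dg by (simp add: rf_refl)
  qed
qed (auto intro: rf_eq.intros)

declare add_uminus_conv_diff[simp del]

definition conj :: "'a::group_add \<Rightarrow> 'a \<Rightarrow> 'a" where "conj a h = -h + a + h"
definition cm :: "'a::group_add \<Rightarrow> 'a \<Rightarrow> 'a" where "cm a b = -a + -b + a + b"

lemmas gs = add.assoc minus_add diff_conv_add_uminus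

lemma conj_add: "conj (a + b) h = conj a h + conj b h" by (simp add: conj_def gs)
lemma conj_minus: "conj (- a) h = - conj a h" by (simp add: conj_def gs)
lemma conj_zero[simp]: "conj 0 h = 0" by (simp add: conj_def)
lemma conj_by_zero[simp]: "conj a 0 = a" by (simp add: conj_def)
lemma conj_conj: "conj (conj a h) h' = conj a (h + h')" by (simp add: conj_def gs)
lemma conj_eq: "conj a h = a + cm a h" by (simp add: conj_def cm_def gs)
lemma cm_eq: "cm a h = - a + conj a h" by (simp add: conj_def cm_def gs)
lemma cm_swap: "cm a b = - cm b a" by (simp add: cm_def gs)
lemma cm_addR: "cm x (a + b) = cm x b + conj (cm x a) b" by (simp add: conj_def cm_def gs)
lemma cm_addL: "cm (a + b) x = conj (cm a x) b + cm b x" by (simp add: conj_def cm_def gs)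
lemma cm_zeroR[simp]: "cm a 0 = 0" by (simp add: cm_def)
lemma cm_zeroL[simp]: "cm 0 a = 0" by (simp add: cm_def)
lemma conj_cm: "conj (cm a b) h = cm (conj a h) (conj b h)" by (simp add: conj_def cm_def gs)
lemma cm_commute: "a + b = b + a \<Longrightarrow> cm a b = 0"
  by (simp add: cm_def gs)
lemma conj_commute: "a + h = h + a \<Longrightarrow> conj a h = a"
  by (simp add: conj_def) (metis add.assoc minus_add_cancel)
lemma add_conj: "a + h = h + conj a h" by (simp add: conj_def gs)

inductive_set sg :: "'a::group_add set \<Rightarrow> 'a set" for S where
  sg0: "0 \<in> sg S"
| sgp: "s \<in> S \<Longrightarrow> a \<in> sg S \<Longrightarrow> s + a \<in> sg S"
| sgm: "s \<in> S \<Longrightarrow> a \<in> sg S \<Longrightarrow> - s + a \<in> sg S"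

lemma sg_add: "a \<in> sg S \<Longrightarrow> b \<in> sg S \<Longrightarrow> a + b \<in> sg S"
  by (induction rule: sg.induct) (auto simp: add.assoc intro: sg.intros)

lemma sg_base: "s \<in> S \<Longrightarrow> s \<in> sg S"
  using sgp[OF _ sg0] by fastforce

lemma sg_uminus: "a \<in> sg S \<Longrightarrow> - a \<in> sg S"
proof (induction rule: sg.induct)
  case sg0 then show ?case by (simp add: sg.sg0)
next
  case (sgp s a) then show ?case
    by (simp add: minus_add) (metis sg_add sgm sg0 add_0_right)
next
  case (sgm s a) then show ?case
    by (simp add: minus_add) (metis sg_add sg_base)
qed

lemma sg_least: "0 \<in> T \<Longrightarrow> (\<And>a b. a \<in> T \<Longrightarrow> b \<in> T \<Longrightarrow> a + b \<in> T) \<Longrightarrow>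
   (\<And>a. a \<in> T \<Longrightarrow> - a \<in> T) \<Longrightarrow> S \<subseteq> T \<Longrightarrow> sg S \<subseteq> T"
proof
  fix x assume *: "0 \<in> T" "(\<And>a b. a \<in> T \<Longrightarrow> b \<in> T \<Longrightarrow> a + b \<in> T)"
     "(\<And>a. a \<in> T \<Longrightarrow> - a \<in> T)" "S \<subseteq> T" and "x \<in> sg S"
  from \<open>x \<in> sg S\<close> show "x \<in> T" by (induction rule: sg.induct) (use * in auto)
qed

lemma sg_mono: "S \<subseteq> S' \<Longrightarrow> sg S \<subseteq> sg S'"
  by (rule sg_least) (auto intro: sg_add sg_uminus sg0 sg_base)

lemma sg_diff: "a \<in> sg S \<Longrightarrow> b \<in> sg S \<Longrightarrow> a + - b \<in> sg S"
  by (simp add: sg_add sg_uminus)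

lemma sg_empty: "sg {} = {0}"
proof -
  have "sg {} \<subseteq> {0}" by (rule sg_least) auto
  then show ?thesis using sg0 by auto
qed

lemma commute_sg: "(\<And>s. s \<in> S \<Longrightarrow> a + s = s + a) \<Longrightarrow> b \<in> sg S \<Longrightarrow> a + b = b + a"
proof -
  assume h: "\<And>s. s \<in> S \<Longrightarrow> a + s = s + a"
  have "sg S \<subseteq> {b. a + b = b + a}"
  proof (rule sg_least)
    fix x y assume "x \<in> {b. a + b = b + a}" "y \<in> {b. a + b = b + a}"
    then show "x + y \<in> {b. a + b = b + a}" by (simp add: add.assoc[symmetric]) (simp add: add.assoc)
  next
    fix x assume "x \<in> {b. a + b = b + a}"
    then have "a + x = x + a" by simp
    then have "- x + (a + x) + - x = - x + (x + a) + - x" by simp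
    then show "- x \<in> {b. a + b = b + a}" by (simp add: add.assoc)
  qed (use h in auto)
  then show "b \<in> sg S \<Longrightarrow> a + b = b + a" by auto
qed

definition X :: "nat \<Rightarrow> rfg" where "X k = abs_rfg (gen k)"
definition Hm :: "nat \<Rightarrow> rfg set" where "Hm m = abs_rfg ` {w. alphabet m w}"

lemma abs_append: "abs_rfg (u @ v) = abs_rfg u + abs_rfg v" by (simp add: plus_rfg.abs_eq)
lemma abs_inv: "abs_rfg (inv_word u) = - abs_rfg u" by (simp add: uminus_rfg.abs_eq)
lemma abs_Nil: "abs_rfg [] = 0" by (simp add: zero_rfg.abs_eq)
lemma abs_Cons: "abs_rfg (a # u) = (if snd a then - X (fst a) else X (fst a)) + abs_rfg u"
proof -
  have "abs_rfg (a # u) = abs_rfg [a] + abs_rfg u" using abs_append[of "[a]" u] by simp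
  moreover have "abs_rfg [a] = (if snd a then - X (fst a) else X (fst a))"
    using abs_inv[of "gen (fst a)"] by (cases a) (auto simp: X_def gen_def inv_word_def)
  ultimately show ?thesis by simp
qed

lemma X_rel: "X i + conj (X i) h = conj (X i) h + X i"
proof -
  have "\<exists>g. abs_rfg g = - h" by (rule rfg.abs_induct[where x="- h"]) blast
  then obtain g where g: "abs_rfg g = - h" by blast
  have "abs_rfg ([] @ gen i @ (g @ gen i @ inv_word g) @ []) = abs_rfg ([] @ (g @ gen i @ inv_word g) @ gen i @ [])"
    using x_rel[of "[]" i g "[]"] rfg.abs_eq_iff by blast
  then show ?thesis using g by (simp add: abs_append abs_inv X_def[symmetric] conj_def add.assoc)
qed

lemma Hm_0[simp]: "0 \<in> Hm m"
  unfolding Hm_def using abs_Nil by (force simp: alphabet_def)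
lemma Hm_add[simp]: "a \<in> Hm m \<Longrightarrow> b \<in> Hm m \<Longrightarrow> a + b \<in> Hm m"
proof -
  assume "a \<in> Hm m" "b \<in> Hm m"
  then obtain u v where "alphabet m u" "alphabet m v" "a = abs_rfg u" "b = abs_rfg v"
    unfolding Hm_def by auto
  then have "alphabet m (u @ v)" "a + b = abs_rfg (u @ v)" by (auto simp: alphabet_def abs_append)
  then show ?thesis unfolding Hm_def by blast
qed
lemma Hm_uminus[simp]: "a \<in> Hm m \<Longrightarrow> - a \<in> Hm m"
  unfolding Hm_def by (force simp: alphabet_def inv_word_def abs_inv[symmetric])
lemma Hm_X[simp]: "1 \<le> k \<Longrightarrow> k \<le> m \<Longrightarrow> X k \<in> Hm m"
  unfolding Hm_def X_def by (force simp: alphabet_def gen_def)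
lemma Hm_mono: "n \<le> m \<Longrightarrow> Hm n \<subseteq> Hm m"
  unfolding Hm_def by (force simp: alphabet_def)
lemma Hm_conj[simp]: "a \<in> Hm m \<Longrightarrow> h \<in> Hm m \<Longrightarrow> conj a h \<in> Hm m"
  by (simp add: conj_def)
lemma Hm_cm[simp]: "a \<in> Hm m \<Longrightarrow> h \<in> Hm m \<Longrightarrow> cm a h \<in> Hm m"
  by (simp add: cm_def)

lemma Hm_induct[consumes 1, case_names zero plus minus]:
  assumes "h \<in> Hm m" and "P 0"
    and "\<And>k h. 1 \<le> k \<Longrightarrow> k \<le> m \<Longrightarrow> h \<in> Hm m \<Longrightarrow> P h \<Longrightarrow> P (X k + h)"
    and "\<And>k h. 1 \<le> k \<Longrightarrow> k \<le> m \<Longrightarrow> h \<in> Hm m \<Longrightarrow> P h \<Longrightarrow> P (- X k + h)"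
  shows "P h"
proof -
  obtain w where w: "alphabet m w" "h = abs_rfg w" using assms(1) unfolding Hm_def by auto
  have "alphabet m w \<Longrightarrow> P (abs_rfg w)"
  proof (induction w)
    case Nil then show ?case using assms(2) abs_Nil by simp
  next
    case (Cons a w)
    then have aw: "alphabet m w" "1 \<le> fst a" "fst a \<le> m" by (auto simp: alphabet_def)
    then have Pw: "P (abs_rfg w)" using Cons by blast
    have hw: "abs_rfg w \<in> Hm m" using aw unfolding Hm_def by blast
    show ?case using assms(3)[OF aw(2,3) hw Pw] assms(4)[OF aw(2,3) hw Pw]
      by (simp add: abs_Cons)
  qed
  then show ?thesis using w by simp
qed

definition NC :: "nat \<Rightarrow> nat \<Rightarrow> rfg set" where
  "NC m k = sg {conj (X k) h | h. h \<in> Hm m}"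

lemma NC_0[simp]: "0 \<in> NC m k" by (simp add: NC_def sg0)
lemma NC_add[simp]: "a \<in> NC m k \<Longrightarrow> b \<in> NC m k \<Longrightarrow> a + b \<in> NC m k" by (simp add: NC_def sg_add)
lemma NC_uminus[simp]: "a \<in> NC m k \<Longrightarrow> - a \<in> NC m k" by (simp add: NC_def sg_uminus)
lemma NC_X[simp]: "X k \<in> NC m k"
proof -
  have "conj (X k) 0 \<in> {conj (X k) h | h. h \<in> Hm m}" using Hm_0 by blast
  then show ?thesis unfolding NC_def by (simp add: sg_base)
qed
lemma NC_conjX[simp]: "h \<in> Hm m \<Longrightarrow> conj (X k) h \<in> NC m k"
  unfolding NC_def by (rule sg_base) blast

lemma NC_sub_Hm: "1 \<le> k \<Longrightarrow> k \<le> m \<Longrightarrow> NC m k \<subseteq> Hm m"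
  unfolding NC_def by (rule sg_least) auto

lemma NC_conj[simp]: "a \<in> NC m k \<Longrightarrow> h \<in> Hm m \<Longrightarrow> conj a h \<in> NC m k"
proof -
  assume h: "h \<in> Hm m"
  have "NC m k \<subseteq> {a. conj a h \<in> NC m k}"
    unfolding NC_def
  proof (rule sg_least)
    show "{conj (X k) h' | h'. h' \<in> Hm m} \<subseteq> {a. conj a h \<in> sg {conj (X k) h | h. h \<in> Hm m}}"
      using h by (auto simp: conj_conj intro!: sg_base)
  qed (auto simp: conj_add conj_minus intro: sg_add sg_uminus sg0)
  then show "a \<in> NC m k \<Longrightarrow> conj a h \<in> NC m k" by auto
qed

lemma NC_cm1[simp]: "a \<in> NC m k \<Longrightarrow> h \<in> Hm m \<Longrightarrow> cm a h \<in> NC m k"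
  by (simp add: cm_eq)
lemma NC_cm2[simp]: "a \<in> NC m k \<Longrightarrow> h \<in> Hm m \<Longrightarrow> cm h a \<in> NC m k"
  by (simp add: cm_swap[of h a])

lemma NC_comm: "a \<in> NC m k \<Longrightarrow> b \<in> NC m k \<Longrightarrow> a + b = b + a"
proof -
  have gens: "s + t = t + s" if st: "s \<in> {conj (X k) h | h. h \<in> Hm m}" "t \<in> {conj (X k) h | h. h \<in> Hm m}" for s t
  proof -
    obtain h h' where hh: "s = conj (X k) h" "t = conj (X k) h'" using st by blast
    have "conj (X k + conj (X k) (h' + - h)) h = conj (conj (X k) (h' + - h) + X k) h"
      by (simp only: X_rel[of k "h' + - h"])
    then show ?thesis using hh by (simp add: conj_add conj_conj add.assoc)
  qed
  assume a: "a \<in> NC m k" and b: "b \<in> NC m k"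
  define GS where "GS = {conj (X k) h | h. h \<in> Hm m}"
  have 1: "t + a = a + t" if "t \<in> GS" for t
  proof (rule commute_sg[of GS t a])
    show "\<And>s. s \<in> GS \<Longrightarrow> t + s = s + t" using gens that unfolding GS_def by blast
    show "a \<in> sg GS" using a unfolding GS_def NC_def .
  qed
  show ?thesis
  proof (rule commute_sg[of GS a b])
    show "\<And>s. s \<in> GS \<Longrightarrow> a + s = s + a" using 1 by simp
    show "b \<in> sg GS" using b unfolding GS_def NC_def .
  qed
qed

lemma NC_left_comm: "a \<in> NC m k \<Longrightarrow> b \<in> NC m k \<Longrightarrow> a + (b + c) = b + (a + c)"
  by (simp add: add.assoc[symmetric] NC_comm[of a m k b])

lemma NC_commX: "a \<in> NC m k \<Longrightarrow> a + X k = X k + a"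
  using NC_comm NC_X by blast

lemma NC_cmX[simp]: "a \<in> NC m k \<Longrightarrow> cm a (X k) = 0"
  by (simp add: NC_commX cm_commute)
lemma NC_cmmX[simp]: "a \<in> NC m k \<Longrightarrow> cm a (- X k) = 0"
proof -
  assume "a \<in> NC m k"
  then have "a + - X k = - X k + a" using NC_comm[of a m k "- X k"] by simp
  then show ?thesis by (rule cm_commute)
qed

lemma cm_addR2: "cm s (y + y') = cm s y + cm (conj s y) y'"
  by (simp add: conj_def cm_def gs)

primrec U :: "nat \<Rightarrow> nat \<Rightarrow> rfg set" where
  "U m 0 = NC m m"
| "U m (Suc r) = sg {cm e y | e y. e \<in> U m r \<and> y \<in> Hm m}"

lemma U_0[simp]: "0 \<in> U m r" by (cases r) (auto intro: sg0)
lemma U_add[simp]: "a \<in> U m r \<Longrightarrow> b \<in> U m r \<Longrightarrow> a + b \<in> U m r"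
  by (cases r) (auto intro: sg_add)
lemma U_uminus[simp]: "a \<in> U m r \<Longrightarrow> - a \<in> U m r"
  by (cases r) (auto intro: sg_uminus)

declare U.simps(2)[simp del]

lemma U_NC: "U m r \<subseteq> NC m m"
proof (induction r)
  case (Suc r) then show ?case by (simp add: U.simps, intro sg_least) auto
qed simp

lemma U_NC'[simp]: "a \<in> U m r \<Longrightarrow> a \<in> NC m m" using U_NC by blast

lemma U_conj[simp]: "e \<in> U m r \<Longrightarrow> y \<in> Hm m \<Longrightarrow> conj e y \<in> U m r"
proof (induction r arbitrary: e)
  case 0 then show ?case by simp
next
  case (Suc r)
  have "sg {cm e y | e y. e \<in> U m r \<and> y \<in> Hm m} \<subseteq> {e. conj e y \<in> sg {cm e y | e y. e \<in> U m r \<and> y \<in> Hm m}}"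
  proof (rule sg_least)
    show "{cm e y | e y. e \<in> U m r \<and> y \<in> Hm m} \<subseteq> {e. conj e y \<in> sg {cm e y | e y. e \<in> U m r \<and> y \<in> Hm m}}"
    proof
      fix x assume "x \<in> {cm e y | e y. e \<in> U m r \<and> y \<in> Hm m}"
      then obtain e' y' where x: "x = cm e' y'" "e' \<in> U m r" "y' \<in> Hm m" by blast
      have "conj x y = cm (conj e' y) (conj y' y)" using x by (simp add: conj_cm)
      moreover have "conj e' y \<in> U m r" using Suc x by blast
      moreover have "conj y' y \<in> Hm m" using Suc x by simp
      ultimately show "x \<in> {e. conj e y \<in> sg {cm e y | e y. e \<in> U m r \<and> y \<in> Hm m}}"
        by (auto intro!: sg_base)
    qed
  qed (auto simp: conj_add conj_minus intro: sg_add sg_uminus sg0)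
  then show ?case using Suc by (auto simp: U.simps)
qed

lemma U_cm[simp]: "e \<in> U m r \<Longrightarrow> y \<in> Hm m \<Longrightarrow> cm e y \<in> U m (Suc r)"
  by (auto simp: U.simps intro!: sg_base)

lemma U_Suc_sub: "U m (Suc r) \<subseteq> U m r"
proof -
  have "sg {cm e y | e y. e \<in> U m r \<and> y \<in> Hm m} \<subseteq> U m r"
    by (rule sg_least) (auto simp: cm_eq)
  then show ?thesis by (simp add: U.simps)
qed

lemma U_SucD: "a \<in> U m (Suc r) \<Longrightarrow> a \<in> U m r" using U_Suc_sub by blast

lemma U_comm: "a \<in> U m r \<Longrightarrow> b \<in> U m r' \<Longrightarrow> a + b = b + a"
  using NC_comm U_NC' by blast

lemma U5: "e \<in> U m r \<Longrightarrow> a \<in> Hm m \<Longrightarrow> b \<in> Hm m \<Longrightarrow> cm e (cm a b) \<in> U m (Suc (Suc r))"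
proof -
  assume e: "e \<in> U m r" and a: "a \<in> Hm m" and b: "b \<in> Hm m"
  define f where "f = conj e (- a + - b)"
  have f: "f \<in> U m r" using e a b by (simp add: f_def)
  have ef: "e = conj f (b + a)" by (simp add: f_def conj_conj add.assoc)
  have ecm0: "conj f (a + b) = conj e (-a + -b + (a + b))" by (simp add: f_def conj_conj)
  have c1: "cm a b = -a + -b + (a + b)" by (simp only: cm_def add.assoc)
  have ecm: "conj e (cm a b) = conj f (a + b)" by (simp only: c1 ecm0)
  have "conj f (a + b) = conj (conj f a) b" by (simp add: conj_conj)
  also have "\<dots> = conj (f + cm f a) b" by (simp add: conj_eq[of f a])
  also have "\<dots> = f + cm f b + (cm f a + cm (cm f a) b)" by (simp only: conj_add) (simp add: conj_eq add.assoc)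
  finally have 1: "conj f (a + b) = f + cm f b + (cm f a + cm (cm f a) b)" .
  have "conj f (b + a) = conj (conj f b) a" by (simp add: conj_conj)
  also have "\<dots> = conj (f + cm f b) a" by (simp add: conj_eq[of f b])
  also have "\<dots> = f + cm f a + (cm f b + cm (cm f b) a)" by (simp only: conj_add) (simp add: conj_eq add.assoc)
  finally have 2: "conj f (b + a) = f + cm f a + (cm f b + cm (cm f b) a)" .
  define B where "B = cm f a"
  define C where "C = cm f b"
  define D where "D = cm B b"
  define E where "E = cm C a"
  have B: "B \<in> U m (Suc r)" and C: "C \<in> U m (Suc r)" using f a b by (simp_all add: B_def C_def)
  have D: "D \<in> U m (Suc (Suc r))" and E: "E \<in> U m (Suc (Suc r))" using B C a b by (simp_all add: D_def E_def)
  have BC: "C + (B + D) = B + (C + D)" using B C NC_left_comm U_NC' by blast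
  have "cm e (cm a b) = - e + conj e (cm a b)" by (rule cm_eq)
  also have "\<dots> = - conj f (b + a) + conj f (a + b)" by (simp only: ecm, subst ef, rule refl)
  also have "\<dots> = - (f + B + (C + E)) + (f + C + (B + D))"
    by (simp only: 1 2 B_def C_def D_def E_def)
  also have "\<dots> = - E + (- C + (- B + (C + (B + D))))" by (simp add: minus_add add.assoc)
  also have "\<dots> = - E + D" by (simp add: BC)
  finally show ?thesis using D E by simp
qed

definition V :: "nat \<Rightarrow> nat set \<Rightarrow> rfg set" where
  "V m S = NC m m \<inter> (\<Inter>k\<in>S. NC m k)"

definition W :: "nat \<Rightarrow> nat \<Rightarrow> rfg set" where
  "W m r = sg (\<Union> {V m S | S. S \<subseteq> {1..<m} \<and> r \<le> card S})"

lemma V_NC: "s \<in> V m S \<Longrightarrow> s \<in> NC m m" by (simp add: V_def)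
lemma V_conj: "s \<in> V m S \<Longrightarrow> y \<in> Hm m \<Longrightarrow> conj s y \<in> V m S" by (simp add: V_def)

lemma W_mono: "r \<le> r' \<Longrightarrow> W m r' \<subseteq> W m r"
  unfolding W_def by (rule sg_mono, rule Union_mono) auto

lemma W_NC: "W m r \<subseteq> NC m m"
  unfolding W_def by (rule sg_least) (auto simp: V_def)

lemma W_vanish: "1 \<le> m \<Longrightarrow> W m m = {0}"
proof -
  assume m: "1 \<le> m"
  have eq: "{V m S | S. S \<subseteq> {1..<m} \<and> m \<le> card S} = {}"
  proof -
    have "card S < m" if "S \<subseteq> {1..<m}" for S
    proof -
      have "card S \<le> card {1..<m}" using that by (intro card_mono) auto
      then show ?thesis using m by simp
    qed
    then show ?thesis by (auto simp: not_le[symmetric])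
  qed
  show ?thesis unfolding W_def eq by (simp add: sg_empty)
qed

lemma V_cmX: "s \<in> V m S \<Longrightarrow> S \<subseteq> {1..<m} \<Longrightarrow> 1 \<le> k \<Longrightarrow> k \<le> m \<Longrightarrow>
   cm s (X k) \<in> W m (Suc (card S)) \<and> cm s (- X k) \<in> W m (Suc (card S))"
proof -
  assume s: "s \<in> V m S" and S: "S \<subseteq> {1..<m}" and k: "1 \<le> k" "k \<le> m"
  have sN: "s \<in> NC m m" using s by (simp add: V_def)
  have sH: "s \<in> Hm m" using sN NC_sub_Hm[of m m] k by auto
  show ?thesis
  proof (cases "k = m \<or> k \<in> S")
    case True
    then have "s \<in> NC m k" using s by (auto simp: V_def)
    then show ?thesis by (simp add: W_def sg0)
  next
    case False
    then have kS: "k \<in> {1..<m}" "k \<notin> S" using k by auto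
    have fin: "finite S" using S finite_subset by blast
    have cardi: "card (insert k S) = Suc (card S)" using fin kS by simp
    have iS: "insert k S \<subseteq> {1..<m}" using S kS by auto
    have XH: "X k \<in> Hm m" "- X k \<in> Hm m" using k by auto
    have a1: "cm s (X k) \<in> V m (insert k S)"
    proof -
      have "cm s (X k) = conj (- X k) s + X k" by (simp add: cm_def conj_def add.assoc)
      then have "cm s (X k) \<in> NC m k" using sH by (simp add: conj_minus)
      moreover have "cm s (X k) \<in> V m S" using s XH by (simp add: V_def)
      ultimately show ?thesis by (simp add: V_def)
    qed
    have a2: "cm s (- X k) \<in> V m (insert k S)"
    proof -
      have "cm s (- X k) = conj (X k) s + - X k" by (simp add: cm_def conj_def add.assoc)
      then have "cm s (- X k) \<in> NC m k" using sH by simp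
      moreover have "cm s (- X k) \<in> V m S" using s XH by (simp add: V_def)
      ultimately show ?thesis by (simp add: V_def)
    qed
    have "V m (insert k S) \<in> {V m T | T. T \<subseteq> {1..<m} \<and> Suc (card S) \<le> card T}"
      using iS cardi by auto
    then have "V m (insert k S) \<subseteq> W m (Suc (card S))"
      unfolding W_def by (auto intro!: sg_base)
    then show ?thesis using a1 a2 by auto
  qed
qed

lemma V_cm: "y \<in> Hm m \<Longrightarrow> s \<in> V m S \<Longrightarrow> S \<subseteq> {1..<m} \<Longrightarrow> cm s y \<in> W m (Suc (card S))"
proof (induction y arbitrary: s rule: Hm_induct)
  case zero then show ?case by (simp add: W_def sg0)
next
  case (plus k h)
  have "cm s (X k + h) = cm s (X k) + cm (conj s (X k)) h" by (rule cm_addR2)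
  moreover have "cm s (X k) \<in> W m (Suc (card S))" using V_cmX plus by blast
  moreover have "cm (conj s (X k)) h \<in> W m (Suc (card S))" using plus V_conj by simp
  ultimately show ?case by (simp add: W_def sg_add)
next
  case (minus k h)
  have "cm s (- X k + h) = cm s (- X k) + cm (conj s (- X k)) h" by (rule cm_addR2)
  moreover have "cm s (- X k) \<in> W m (Suc (card S))" using V_cmX minus by blast
  moreover have "cm (conj s (- X k)) h \<in> W m (Suc (card S))" using minus V_conj by simp
  ultimately show ?case by (simp add: W_def sg_add)
qed

lemma NC_conj_triv: "a \<in> NC m k \<Longrightarrow> b \<in> NC m k \<Longrightarrow> conj a b = a"
  by (rule conj_commute) (rule NC_comm)

lemma cm_NC_add: "a \<in> NC m m \<Longrightarrow> b \<in> NC m m \<Longrightarrow> y \<in> Hm m \<Longrightarrow> cm (a + b) y = cm a y + cm b y"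
proof -
  assume a: "a \<in> NC m m" and b: "b \<in> NC m m" and y: "y \<in> Hm m"
  have "cm a y \<in> NC m m" using a y by simp
  then have "conj (cm a y) b = cm a y" using NC_conj_triv b by blast
  then show ?thesis by (simp add: cm_addL)
qed

lemma cm_NC_neg: "a \<in> NC m m \<Longrightarrow> y \<in> Hm m \<Longrightarrow> cm (- a) y = - cm a y"
proof -
  assume a: "a \<in> NC m m" and y: "y \<in> Hm m"
  have "cm (a + - a) y = cm a y + cm (- a) y" using a y by (intro cm_NC_add) auto
  then have "cm a y + cm (- a) y = 0" by simp
  then show ?thesis by (simp add: minus_unique)
qed

lemma W_cm: "e \<in> W m r \<Longrightarrow> y \<in> Hm m \<Longrightarrow> cm e y \<in> W m (Suc r)"
proof -
  assume e: "e \<in> W m r" and y: "y \<in> Hm m"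
  have "W m r \<subseteq> {e. e \<in> NC m m \<and> cm e y \<in> W m (Suc r)}"
    unfolding W_def[of m r]
  proof (rule sg_least)
    show "\<Union> {V m S | S. S \<subseteq> {1..<m} \<and> r \<le> card S} \<subseteq> {e. e \<in> NC m m \<and> cm e y \<in> W m (Suc r)}"
    proof
      fix s assume "s \<in> \<Union> {V m S | S. S \<subseteq> {1..<m} \<and> r \<le> card S}"
      then obtain S where S: "s \<in> V m S" "S \<subseteq> {1..<m}" "r \<le> card S" by blast
      have "cm s y \<in> W m (Suc (card S))" using V_cm y S by blast
      moreover have "W m (Suc (card S)) \<subseteq> W m (Suc r)" using S by (intro W_mono) simp
      ultimately show "s \<in> {e. e \<in> NC m m \<and> cm e y \<in> W m (Suc r)}" using S V_NC by auto
    qed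
  next
    fix a b assume "a \<in> {e. e \<in> NC m m \<and> cm e y \<in> W m (Suc r)}" "b \<in> {e. e \<in> NC m m \<and> cm e y \<in> W m (Suc r)}"
    then show "a + b \<in> {e. e \<in> NC m m \<and> cm e y \<in> W m (Suc r)}"
      using y by (auto simp: cm_NC_add W_def intro: sg_add)
  next
    fix a assume "a \<in> {e. e \<in> NC m m \<and> cm e y \<in> W m (Suc r)}"
    then show "- a \<in> {e. e \<in> NC m m \<and> cm e y \<in> W m (Suc r)}"
      using y by (auto simp: cm_NC_neg W_def intro: sg_uminus)
  qed (simp add: W_def sg0)
  then show ?thesis using e by auto
qed

lemma U_W: "U m r \<subseteq> W m r"
proof (induction r)
  case 0
  have "V m {} = NC m m" by (simp add: V_def)
  then show ?case unfolding W_def by (auto intro!: sg_base)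
next
  case (Suc r)
  show ?case unfolding U.simps
  proof (rule sg_least)
    show "{cm e y |e y. e \<in> U m r \<and> y \<in> Hm m} \<subseteq> W m (Suc r)" using Suc W_cm by blast
  qed (auto simp: W_def intro: sg0 sg_add sg_uminus)
qed

lemma U_vanish: "1 \<le> m \<Longrightarrow> U m m = {0}"
  using U_W[of m m] W_vanish[of m] U_0[of m m] by blast

definition P :: "nat \<Rightarrow> int \<Rightarrow> rfg" where "P k a = abs_rfg (gpow k a)"

lemma P_0[simp]: "P k 0 = 0" by (simp add: P_def gpow_def abs_Nil)

lemma P_succ: "P k (a + 1) = X k + P k a"
proof (cases "0 \<le> a")
  case True
  then have "gpow k (a + 1) = (k, False) # gpow k a"
    by (simp add: gpow_def nat_add_distrib)
  then show ?thesis by (simp add: P_def abs_Cons)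
next
  case False
  have n: "nat (- a) = Suc (nat (- (a + 1)))" using False by simp
  have g1: "gpow k (a + 1) = replicate (nat (- (a + 1))) (k, True)"
    using False by (cases "a + 1 = 0") (auto simp: gpow_def)
  have "gpow k a = (k, True) # gpow k (a + 1)"
    using False by (simp only: g1) (simp add: gpow_def n)
  then have "P k a = - X k + P k (a + 1)" by (simp add: P_def abs_Cons)
  then show ?thesis by (simp add: add.assoc[symmetric])
qed

lemma P_pred: "P k (a - 1) = - X k + P k a"
  using P_succ[of k "a - 1"] by (simp add: add.assoc[symmetric])

lemma P_NC: "P m a \<in> NC m m"
proof (induction a rule: int_induct[where k=0])
  case base then show ?case by simp
next
  case (step1 i) then show ?case by (simp add: P_succ)
next
  case (step2 i) then show ?case by (simp add: P_pred)
qed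

lemma P_Hm: "1 \<le> k \<Longrightarrow> k \<le> m \<Longrightarrow> P k a \<in> Hm m"
proof (induction a rule: int_induct[where k=0])
  case base then show ?case by simp
next
  case (step1 i) then show ?case by (simp add: P_succ)
next
  case (step2 i) then show ?case by (simp add: P_pred)
qed

fun XP :: "nat \<Rightarrow> (nat \<Rightarrow> int) \<Rightarrow> rfg" where
  "XP 0 \<alpha> = 0"
| "XP (Suc n) \<alpha> = P (Suc n) (\<alpha> (Suc n)) + XP n \<alpha>"

lemma XP_cong: "(\<And>k. k \<le> n \<Longrightarrow> \<alpha> k = \<beta> k) \<Longrightarrow> XP n \<alpha> = XP n \<beta>"
  by (induction n) auto

lemma XP_Hm: "XP n \<alpha> \<in> Hm n"
proof (induction n)
  case (Suc n)
  then show ?case using Hm_mono[of n "Suc n"] P_Hm[of "Suc n" "Suc n"] by auto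
qed simp

definition zz :: "(nat \<Rightarrow> bool) \<Rightarrow> rfg \<Rightarrow> nat \<Rightarrow> rfg" where
  "zz c w k = (if c k then cm w (X k) else cm (X k) w)"

lemma zz_0[simp]: "zz c 0 k = 0" by (simp add: zz_def)

lemma pull: "sum_list (map (\<lambda>k. g k + h k) [a..<b]) =
   sum_list (map g [a..<b]) + sum_list (map (\<lambda>k. conj (h k) (sum_list (map g [Suc k..<b]))) [a..<b])"
proof (induction "b - a" arbitrary: a)
  case 0 then show ?case by simp
next
  case (Suc d)
  then have ab: "a < b" "d = b - Suc a" by auto
  have IH: "sum_list (map (\<lambda>k. g k + h k) [Suc a..<b]) =
   sum_list (map g [Suc a..<b]) + sum_list (map (\<lambda>k. conj (h k) (sum_list (map g [Suc k..<b]))) [Suc a..<b])"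
    using Suc ab by blast
  have "[a..<b] = a # [Suc a..<b]" using ab by (simp add: upt_conv_Cons)
  then show ?case using IH
    by (simp add: add.assoc) (simp add: add.assoc[symmetric] add_conj[of "h a"])
qed

lemma sum_list_zero: "(\<And>k. k \<in> set L \<Longrightarrow> f k = 0) \<Longrightarrow> sum_list (map f L) = (0::rfg)"
  by (induction L) auto

lemma sum_list_NC: "(\<And>k. k \<in> set L \<Longrightarrow> f k \<in> NC m j) \<Longrightarrow> sum_list (map f L) \<in> NC m j"
  by (induction L) auto

lemma sum_upd: "(\<And>i. i \<in> set L \<Longrightarrow> f i \<in> NC m j) \<Longrightarrow> s \<in> NC m j \<Longrightarrow> distinct L \<Longrightarrow> k \<in> set L \<Longrightarrow>
   s + sum_list (map f L) = sum_list (map (f(k := s + f k)) L)"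
proof (induction L)
  case Nil then show ?case by simp
next
  case (Cons i L)
  show ?case
  proof (cases "i = k")
    case True
    then have "k \<notin> set L" using Cons by simp
    then have "map (f(k := s + f k)) L = map f L" by (intro map_cong) auto
    then have eq: "sum_list (map (f(k := s + f k)) L) = sum_list (map f L)" by (rule arg_cong)
    have "sum_list (map (f(k := s + f k)) (i # L)) = (s + f k) + sum_list (map (f(k := s + f k)) L)"
      using True by simp
    then show ?thesis using True by (simp only: eq add.assoc list.map sum_list.Cons)
  next
    case False
    have IH: "s + sum_list (map f L) = sum_list (map (f(k := s + f k)) L)"
      by (rule Cons.IH) (use Cons.prems False in auto)
    have comm: "s + (f i + sum_list (map f L)) = f i + (s + sum_list (map f L))"
      using Cons.prems by (intro NC_left_comm) auto
    have fi: "(f(k := s + f k)) i = f i" using False by simp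
    show ?thesis by (simp only: list.map sum_list.Cons fi comm IH)
  qed
qed

lemma cm_NC_add2: "a \<in> NC m m \<Longrightarrow> b \<in> NC m m \<Longrightarrow> y \<in> Hm m \<Longrightarrow> cm y (a + b) = cm y a + cm y b"
proof -
  assume a: "a \<in> NC m m" and b: "b \<in> NC m m" and y: "y \<in> Hm m"
  have "cm y a \<in> NC m m" using a y by simp
  then have "conj (cm y a) b = cm y a" using NC_conj_triv b by blast
  then have "cm y (a + b) = cm y b + cm y a" by (simp add: cm_addR)
  also have "\<dots> = cm y a + cm y b" using a b y NC_comm[of "cm y b" m m "cm y a"] by simp
  finally show ?thesis .
qed

lemma cm_neg_inv: "cm e (- x) = - cm (conj e (- x)) x"
  by (simp add: cm_def conj_def minus_add add.assoc)

locale stepctx =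
  fixes n :: nat and c :: "nat \<Rightarrow> bool" and \<omega> :: "nat \<Rightarrow> rfg" and \<alpha> :: "nat \<Rightarrow> int"
  assumes \<omega>_H: "\<And>k. k \<in> {1..<Suc n} \<Longrightarrow> \<omega> k \<in> Hm (Suc n)"
begin

abbreviation m where "m \<equiv> Suc n"

definition g where "g k = zz c (\<omega> k) k"
definition G where "G k = sum_list (map g [Suc k..<m])"
definition eps where "eps k v = - g k + zz c (\<omega> k + v) k"
definition Q where "Q = XP n \<alpha> + sum_list (map g [1..<m])"
definition gens where
  "gens = {conj (X m) Q} \<union> {conj (eps k v) (G k) | k v. k \<in> {1..<m} \<and> v \<in> NC m m}"
definition J where "J = sg gens"
definition R where "R v = sum_list (map (\<lambda>k. conj (eps k (v k)) (G k)) [1..<m])"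

lemma NC_H: "v \<in> NC m m \<Longrightarrow> v \<in> Hm m"
  using NC_sub_Hm[of m m] by auto

lemma g_H: "k \<in> {1..<m} \<Longrightarrow> g k \<in> Hm m"
  using \<omega>_H[of k] by (auto simp: g_def zz_def)

lemma sum_g_H: "set L \<subseteq> {1..<m} \<Longrightarrow> sum_list (map g L) \<in> Hm m"
  by (induction L) (auto simp: g_H)

lemma G_H: "G k \<in> Hm m"
  unfolding G_def by (rule sum_g_H) auto

lemma Q_H: "Q \<in> Hm m"
proof -
  have "sum_list (map g [1..<m]) \<in> Hm m" by (rule sum_g_H) auto
  moreover have "XP n \<alpha> \<in> Hm m" using XP_Hm[of n \<alpha>] Hm_mono[of n m] by auto
  ultimately show ?thesis unfolding Q_def by simp
qed

lemma J_0[simp]: "0 \<in> J" by (simp add: J_def sg0)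
lemma J_add[simp]: "a \<in> J \<Longrightarrow> b \<in> J \<Longrightarrow> a + b \<in> J" by (simp add: J_def sg_add)
lemma J_uminus[simp]: "a \<in> J \<Longrightarrow> - a \<in> J" by (simp add: J_def sg_uminus)
lemma J_gen1: "conj (X m) Q \<in> J" by (simp add: J_def gens_def sg_base)
lemma J_gen2: "k \<in> {1..<m} \<Longrightarrow> v \<in> NC m m \<Longrightarrow> conj (eps k v) (G k) \<in> J"
  unfolding J_def gens_def by (rule sg_base) blast

lemma eps_form1: "c k \<Longrightarrow> eps k v = cm (g k) v + cm v (X k)"
  by (simp add: eps_def g_def zz_def cm_def conj_def minus_add add.assoc)

lemma eps_form2: "\<not> c k \<Longrightarrow> eps k v = conj (cm (X k) v) (g k) + cm (g k) v"
  by (simp add: eps_def g_def zz_def cm_def conj_def minus_add add.assoc)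

lemma eps_NC: "k \<in> {1..<m} \<Longrightarrow> v \<in> NC m m \<Longrightarrow> eps k v \<in> NC m m"
proof -
  assume k: "k \<in> {1..<m}" and v: "v \<in> NC m m"
  have H: "g k \<in> Hm m" "X k \<in> Hm m" using k g_H by auto
  show ?thesis
    by (cases "c k") (use H v in \<open>simp_all add: eps_form1 eps_form2\<close>)
qed

lemma eps_0[simp]: "eps k 0 = 0" by (simp add: eps_def g_def)

lemma eps_add: "k \<in> {1..<m} \<Longrightarrow> v \<in> NC m m \<Longrightarrow> v' \<in> NC m m \<Longrightarrow> eps k (v + v') = eps k v + eps k v'"
proof -
  assume k: "k \<in> {1..<m}" and v: "v \<in> NC m m" and v': "v' \<in> NC m m"
  have H: "g k \<in> Hm m" "X k \<in> Hm m" using k g_H by auto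
  show ?thesis
  proof (cases "c k")
    case True
    have "eps k (v + v') = cm (g k) v + cm (g k) v' + (cm v (X k) + cm v' (X k))"
      using True H v v' by (simp add: eps_form1 cm_NC_add cm_NC_add2)
    also have "\<dots> = cm (g k) v + (cm v (X k) + (cm (g k) v' + cm v' (X k)))"
      using H v v' by (simp add: add.assoc NC_left_comm[of "cm (g k) v'" m m "cm v (X k)"])
    finally show ?thesis using True by (simp add: eps_form1 add.assoc)
  next
    case False
    have "eps k (v + v') = conj (cm (X k) v) (g k) + conj (cm (X k) v') (g k) + (cm (g k) v + cm (g k) v')"
      using False H v v' by (simp add: eps_form2 cm_NC_add2 conj_add)
    also have "\<dots> = conj (cm (X k) v) (g k) + (cm (g k) v + (conj (cm (X k) v') (g k) + cm (g k) v'))"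
      using H v v' by (simp add: add.assoc NC_left_comm[of "conj (cm (X k) v') (g k)" m m "cm (g k) v"])
    finally show ?thesis using False by (simp add: eps_form2 add.assoc)
  qed
qed

lemma eps_neg: "k \<in> {1..<m} \<Longrightarrow> v \<in> NC m m \<Longrightarrow> eps k (- v) = - eps k v"
proof -
  assume k: "k \<in> {1..<m}" and v: "v \<in> NC m m"
  have "eps k (v + - v) = eps k v + eps k (- v)" using k v by (intro eps_add) auto
  then have "eps k v + eps k (- v) = 0" by simp
  then show ?thesis by (simp add: minus_unique)
qed

lemma key: "k \<in> {1..<m} \<Longrightarrow> e \<in> U m r \<Longrightarrow> U m (Suc (Suc r)) \<subseteq> J \<Longrightarrow> cm e (X k) \<in> J"
proof -
  assume k: "k \<in> {1..<m}" and e: "e \<in> U m r" and UJ: "U m (Suc (Suc r)) \<subseteq> J"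
  have H: "g k \<in> Hm m" "X k \<in> Hm m" "\<omega> k \<in> Hm m" "G k \<in> Hm m" using k g_H \<omega>_H G_H by auto
  define t where "t = conj (eps k e) (G k)"
  have t: "t \<in> J" unfolding t_def using k e by (intro J_gen2) auto
  show ?thesis
  proof (cases "c k")
    case True
    have gk: "g k = cm (\<omega> k) (X k)" using True by (simp add: g_def zz_def)
    have "cm e (g k) \<in> U m (Suc (Suc r))" using U5[OF e H(3) H(2)] gk by simp
    then have A: "cm (g k) e \<in> U m (Suc (Suc r))" by (simp add: cm_swap[of "g k" e])
    have B: "cm e (X k) \<in> U m (Suc r)" using e H by simp
    have epsU: "eps k e \<in> U m (Suc r)" using U_SucD[OF A] B True by (simp add: eps_form1)
    have C: "cm (eps k e) (G k) \<in> U m (Suc (Suc r))" using epsU H by simp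
    have "t = cm (g k) e + cm e (X k) + cm (eps k e) (G k)"
      unfolding t_def by (simp add: conj_eq eps_form1 True)
    then have "cm e (X k) = - cm (g k) e + t + - cm (eps k e) (G k)"
      by (simp add: add.assoc)
    moreover have "cm (g k) e \<in> J" "cm (eps k e) (G k) \<in> J" using A C UJ by blast+
    ultimately show ?thesis using t by simp
  next
    case False
    have gk: "g k = cm (X k) (\<omega> k)" using False by (simp add: g_def zz_def)
    have B: "cm (X k) e \<in> U m (Suc r)" using e H by (simp add: cm_swap[of "X k" e])
    have "cm e (g k) \<in> U m (Suc (Suc r))" using U5[OF e H(2) H(3)] gk by simp
    then have A: "cm (g k) e \<in> U m (Suc (Suc r))" by (simp add: cm_swap[of "g k" e])
    have D: "cm (cm (X k) e) (g k) \<in> U m (Suc (Suc r))"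
      using U_SucD[OF U5[OF B H(2) H(3)]] gk by simp
    have epsU: "eps k e \<in> U m (Suc r)" using U_SucD[OF A] B U_SucD[OF D] False
      by (simp add: eps_form2 conj_eq)
    have C: "cm (eps k e) (G k) \<in> U m (Suc (Suc r))" using epsU H by simp
    have "t = cm (X k) e + cm (cm (X k) e) (g k) + cm (g k) e + cm (eps k e) (G k)"
    proof -
      have "t = eps k e + cm (eps k e) (G k)" by (simp only: t_def conj_eq)
      moreover have "eps k e = cm (X k) e + cm (cm (X k) e) (g k) + cm (g k) e"
        using eps_form2[OF False, of e] conj_eq[of "cm (X k) e" "g k"] by simp
      ultimately show ?thesis by simp
    qed
    then have eq: "cm (X k) e = t + - cm (eps k e) (G k) + - cm (g k) e + - cm (cm (X k) e) (g k)"
      by (simp add: add.assoc)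
    have m3: "cm (g k) e \<in> J" "cm (eps k e) (G k) \<in> J" "cm (cm (X k) e) (g k) \<in> J"
      using A C D UJ by blast+
    have "t + - cm (eps k e) (G k) + - cm (g k) e + - cm (cm (X k) e) (g k) \<in> J"
      using m3 t by simp
    then have "cm (X k) e \<in> J" by (subst eq)
    then have "- cm (X k) e \<in> J" by simp
    then show ?thesis by (simp add: cm_swap[of "X k" e])
  qed
qed

lemma key_gen: "y \<in> Hm m \<Longrightarrow> e \<in> U m r \<Longrightarrow> U m (Suc (Suc r)) \<subseteq> J \<Longrightarrow> cm e y \<in> J"
proof (induction y arbitrary: e rule: Hm_induct)
  case zero then show ?case by simp
next
  case (plus k h)
  have 1: "cm e (X k) \<in> J"
  proof (cases "k = m")
    case True
    have "e \<in> NC m m" using plus by simp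
    then show ?thesis using True by simp
  next
    case False then show ?thesis using plus key by auto
  qed
  have "cm (conj e (X k)) h \<in> J" using plus by simp
  then show ?case using 1 by (simp add: cm_addR2)
next
  case (minus k h)
  have 1: "cm e (- X k) \<in> J"
  proof (cases "k = m")
    case True
    have "e \<in> NC m m" using minus by simp
    then show ?thesis using True by simp
  next
    case False
    have "conj e (- X k) \<in> U m r" using minus by simp
    moreover have "k \<in> {1..<m}" using minus False by auto
    ultimately have "cm (conj e (- X k)) (X k) \<in> J" using minus key[of k "conj e (- X k)" r] by blast
    then show ?thesis by (simp add: cm_neg_inv)
  qed
  have "cm (conj e (- X k)) h \<in> J" using minus by simp
  then show ?case using 1 by (simp add: cm_addR2)
qed

lemma U_step: "U m (Suc r) \<subseteq> J \<Longrightarrow> U m r \<subseteq> J"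
proof (cases r)
  case 0
  assume U1: "U m (Suc r) \<subseteq> J"
  have "NC m m \<subseteq> J" unfolding NC_def
  proof (rule sg_least)
    show "{conj (X m) h | h. h \<in> Hm m} \<subseteq> J"
    proof
      fix x assume "x \<in> {conj (X m) h | h. h \<in> Hm m}"
      then obtain h where h: "x = conj (X m) h" "h \<in> Hm m" by blast
      have a: "cm (X m) Q \<in> J" "cm (X m) h \<in> J" using U1 0 h Q_H by (auto intro!: U_cm)
      have "x = conj (X m) Q + (- cm (X m) Q + cm (X m) h)"
        using h by (simp add: conj_eq add.assoc)
      then show "x \<in> J" using a J_gen1 by simp
    qed
  qed auto
  then show ?thesis using 0 by simp
next
  case (Suc r')
  assume U1: "U m (Suc r) \<subseteq> J"
  show ?thesis unfolding Suc U.simps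
  proof (rule sg_least)
    show "{cm e y | e y. e \<in> U m r' \<and> y \<in> Hm m} \<subseteq> J"
      using key_gen U1 Suc by blast
  qed auto
qed

lemma U_J: "U m r \<subseteq> J"
proof -
  have "\<forall>j. j \<le> m \<longrightarrow> U m (m - j) \<subseteq> J"
  proof
    fix j show "j \<le> m \<longrightarrow> U m (m - j) \<subseteq> J"
    proof (induction j)
      case 0 then show ?case using U_vanish[of m] by simp
    next
      case (Suc j)
      show ?case
      proof
        assume "Suc j \<le> m"
        moreover have "Suc (m - Suc j) = m - j" using \<open>Suc j \<le> m\<close> by simp
        ultimately have "U m (Suc (m - Suc j)) \<subseteq> J" using Suc by simp
        then show "U m (m - Suc j) \<subseteq> J" by (rule U_step)
      qed
    qed
  qed
  then have "U m 0 \<subseteq> J" by (metis diff_self_eq_0 order_refl)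
  moreover have "U m r \<subseteq> U m 0" by (induction r) (use U_Suc_sub in auto)
  ultimately show ?thesis by blast
qed

end

context stepctx begin

lemma term_NC: "k \<in> {1..<m} \<Longrightarrow> u \<in> NC m m \<Longrightarrow> conj (eps k u) (G k) \<in> NC m m"
  using eps_NC G_H by simp

lemma R_NC: "(\<And>k. v k \<in> NC m m) \<Longrightarrow> R v \<in> NC m m"
  unfolding R_def by (rule sum_list_NC) (use term_NC in auto)

lemma R_upd: "(\<And>k. v k \<in> NC m m) \<Longrightarrow> u \<in> NC m m \<Longrightarrow> k \<in> {1..<m} \<Longrightarrow>
  conj (eps k u) (G k) + R v = R (v(k := u + v k))"
proof -
  assume v: "\<And>k. v k \<in> NC m m" and u: "u \<in> NC m m" and k: "k \<in> {1..<m}"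
  define f where "f i = conj (eps i (v i)) (G i)" for i
  have "conj (eps k u) (G k) + sum_list (map f [1..<m]) =
        sum_list (map (f(k := conj (eps k u) (G k) + f k)) [1..<m])"
    by (rule sum_upd) (use v u k term_NC in \<open>auto simp: f_def\<close>)
  also have "map (f(k := conj (eps k u) (G k) + f k)) [1..<m] =
             map (\<lambda>i. conj (eps i ((v(k := u + v k)) i)) (G i)) [1..<m]"
  proof (rule map_cong)
    fix i assume "i \<in> set [1..<m]"
    show "(f(k := conj (eps k u) (G k) + f k)) i = conj (eps i ((v(k := u + v k)) i)) (G i)"
    proof (cases "i = k")
      case True
      then show ?thesis using v u k by (simp add: f_def eps_add conj_add)
    next
      case False then show ?thesis by (simp add: f_def)
    qed
  qed simp
  finally show ?thesis unfolding R_def f_def .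
qed

lemma extractJ: "j \<in> J \<Longrightarrow> \<exists>a v. (\<forall>k. v k \<in> NC m m) \<and> j = conj (P m a) Q + R v"
  unfolding J_def
proof (induction rule: sg.induct)
  case sg0
  have "R (\<lambda>_. 0) = 0" unfolding R_def by (rule sum_list_zero) simp
  then show ?case by (intro exI[of _ 0] exI[of _ "\<lambda>_. 0"]) simp
next
  case (sgp s j)
  then obtain a v where av: "\<forall>k. v k \<in> NC m m" "j = conj (P m a) Q + R v" by blast
  have pN: "conj (P m a) Q \<in> NC m m" using P_NC Q_H by simp
  from sgp(1) show ?case unfolding gens_def
  proof (elim UnE)
    assume "s \<in> {conj (X m) Q}"
    then have "s + j = conj (P m (a + 1)) Q + R v"
      using av by (simp add: P_succ conj_add add.assoc)
    then show ?thesis using av by blast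
  next
    assume "s \<in> {conj (eps k v) (G k) | k v. k \<in> {1..<m} \<and> v \<in> NC m m}"
    then obtain k u where ku: "s = conj (eps k u) (G k)" "k \<in> {1..<m}" "u \<in> NC m m" by blast
    have sN: "s \<in> NC m m" using ku term_NC by simp
    have "s + j = conj (P m a) Q + (s + R v)"
      using av(2) NC_left_comm[OF sN pN, of "R v"] by simp
    also have "s + R v = R (v(k := u + v k))" using ku av R_upd by simp
    finally have "s + j = conj (P m a) Q + R (v(k := u + v k))" .
    moreover have "\<forall>i. (v(k := u + v k)) i \<in> NC m m" using av ku by simp
    ultimately show ?thesis by blast
  qed
next
  case (sgm s j)
  then obtain a v where av: "\<forall>k. v k \<in> NC m m" "j = conj (P m a) Q + R v" by blast
  have pN: "conj (P m a) Q \<in> NC m m" using P_NC Q_H by simp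
  from sgm(1) show ?case unfolding gens_def
  proof (elim UnE)
    assume "s \<in> {conj (X m) Q}"
    then have "- s + j = conj (P m (a - 1)) Q + R v"
      using av by (simp add: P_pred conj_add conj_minus add.assoc)
    then show ?thesis using av by blast
  next
    assume "s \<in> {conj (eps k v) (G k) | k v. k \<in> {1..<m} \<and> v \<in> NC m m}"
    then obtain k u where ku: "s = conj (eps k u) (G k)" "k \<in> {1..<m}" "u \<in> NC m m" by blast
    have ms: "- s = conj (eps k (- u)) (G k)" using ku by (simp add: eps_neg conj_minus)
    have sN: "- s \<in> NC m m" using ku term_NC by simp
    have "- s + j = conj (P m a) Q + (- s + R v)"
      using av(2) NC_left_comm[OF sN pN, of "R v"] by simp
    also have "- s + R v = R (v(k := - u + v k))" using ku av R_upd ms by simp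
    finally have "- s + j = conj (P m a) Q + R (v(k := - u + v k))" .
    moreover have "\<forall>i. (v(k := - u + v k)) i \<in> NC m m" using av ku by simp
    ultimately show ?thesis by blast
  qed
qed

lemma step_final: "e \<in> NC m m \<Longrightarrow> \<exists>a v. (\<forall>k. v k \<in> NC m m) \<and>
   Q + e = P m a + XP n \<alpha> + sum_list (map (\<lambda>k. zz c (\<omega> k + v k) k) [1..<m])"
proof -
  assume e: "e \<in> NC m m"
  then have "e \<in> J" using U_J[of 0] by auto
  then obtain a v where av: "\<forall>k. v k \<in> NC m m" "e = conj (P m a) Q + R v" using extractJ by blast
  have qc: "Q + conj (P m a) Q = P m a + Q" by (simp only: add_conj[of "P m a" Q])
  have "Q + e = (Q + conj (P m a) Q) + R v" using av by (simp only: add.assoc)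
  also have "\<dots> = P m a + (Q + R v)" by (simp only: qc add.assoc)
  also have "Q + R v = XP n \<alpha> + (sum_list (map g [1..<m]) + R v)" by (simp only: Q_def add.assoc)
  also have "sum_list (map g [1..<m]) + R v = sum_list (map (\<lambda>k. g k + eps k (v k)) [1..<m])"
    unfolding R_def G_def by (rule pull[symmetric])
  also have "map (\<lambda>k. g k + eps k (v k)) [1..<m] = map (\<lambda>k. zz c (\<omega> k + v k) k) [1..<m]"
    by (simp add: eps_def)
  finally show ?thesis using av by (auto simp: add.assoc)
qed

end

lemma Hm_zero: "x \<in> Hm 0 \<Longrightarrow> x = 0"
  by (induction x rule: Hm_induct) auto

lemma decomp: "x \<in> Hm (Suc n) \<Longrightarrow> \<exists>y e. y \<in> Hm n \<and> e \<in> NC (Suc n) (Suc n) \<and> x = y + e"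
proof (induction x rule: Hm_induct)
  case zero then show ?case by (intro exI[of _ 0]) auto
next
  case (plus k h)
  then obtain y e where ye: "y \<in> Hm n" "e \<in> NC (Suc n) (Suc n)" "h = y + e" by blast
  show ?case
  proof (cases "k = Suc n")
    case True
    have yH: "y \<in> Hm (Suc n)" using ye Hm_mono[of n "Suc n"] by auto
    have "X k + h = y + (conj (X (Suc n)) y + e)" using ye True add_conj[of "X (Suc n)" y]
      by (simp only: add.assoc[symmetric])
    moreover have "conj (X (Suc n)) y + e \<in> NC (Suc n) (Suc n)" using yH ye by simp
    ultimately show ?thesis using ye by blast
  next
    case False
    then have "X k + y \<in> Hm n" using plus ye by simp
    moreover have "X k + h = (X k + y) + e" using ye by (simp add: add.assoc)
    ultimately show ?thesis using ye by blast
  qed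
next
  case (minus k h)
  then obtain y e where ye: "y \<in> Hm n" "e \<in> NC (Suc n) (Suc n)" "h = y + e" by blast
  show ?case
  proof (cases "k = Suc n")
    case True
    have yH: "y \<in> Hm (Suc n)" using ye Hm_mono[of n "Suc n"] by auto
    have "- X k + h = y + (conj (- X (Suc n)) y + e)" using ye True add_conj[of "- X (Suc n)" y]
      by (simp only: add.assoc[symmetric])
    moreover have "conj (- X (Suc n)) y + e \<in> NC (Suc n) (Suc n)" using yH ye by (simp add: conj_minus)
    ultimately show ?thesis using ye by blast
  next
    case False
    then have "- X k + y \<in> Hm n" using minus ye by simp
    moreover have "- X k + h = (- X k + y) + e" using ye by (simp add: add.assoc)
    ultimately show ?thesis using ye by blast
  qed
qed

lemma main_grp: "x \<in> Hm n \<Longrightarrow> \<exists>\<alpha> \<omega>. (\<forall>k\<in>{1..<n}. \<omega> k \<in> Hm n) \<and>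
   x = XP n \<alpha> + sum_list (map (\<lambda>k. zz c (\<omega> k) k) [1..<n])"
proof (induction n arbitrary: x)
  case 0 then show ?case using Hm_zero by simp
next
  case (Suc n)
  obtain y e where ye: "y \<in> Hm n" "e \<in> NC (Suc n) (Suc n)" "x = y + e" using decomp Suc.prems by blast
  obtain \<alpha> \<omega> where IH: "\<forall>k\<in>{1..<n}. \<omega> k \<in> Hm n"
    "y = XP n \<alpha> + sum_list (map (\<lambda>k. zz c (\<omega> k) k) [1..<n])" using Suc.IH ye by blast
  define \<omega>0 where "\<omega>0 = \<omega>(n := 0)"
  have om0: "\<And>k. k \<in> {1..<Suc n} \<Longrightarrow> \<omega>0 k \<in> Hm (Suc n)"
    using IH Hm_mono[of n "Suc n"] by (auto simp: \<omega>0_def)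
  interpret S: stepctx n c \<omega>0 \<alpha> by standard (rule om0)
  have "sum_list (map S.g [1..<Suc n]) = sum_list (map (\<lambda>k. zz c (\<omega> k) k) [1..<n])"
  proof (cases n)
    case 0 then show ?thesis by simp
  next
    case (Suc n')
    have "map S.g [1..<n] = map (\<lambda>k. zz c (\<omega> k) k) [1..<n]"
      by (rule map_cong) (simp_all add: S.g_def, simp add: \<omega>0_def)
    moreover have "S.g n = 0" by (simp add: S.g_def, simp add: \<omega>0_def)
    moreover have "[1..<Suc n] = [1..<n] @ [n]" using Suc by simp
    ultimately show ?thesis by (simp only: map_append sum_list_append) simp
  qed
  then have yQ: "y = S.Q" using IH by (simp add: S.Q_def)
  obtain a v where av: "\<forall>k. v k \<in> NC (Suc n) (Suc n)"
    "S.Q + e = P (Suc n) a + XP n \<alpha> + sum_list (map (\<lambda>k. zz c (\<omega>0 k + v k) k) [1..<Suc n])"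
    using S.step_final ye by blast
  define \<alpha>' where "\<alpha>' = \<alpha>(Suc n := a)"
  define \<omega>' where "\<omega>' k = \<omega>0 k + v k" for k
  have "XP n \<alpha>' = XP n \<alpha>" by (rule XP_cong) (simp add: \<alpha>'_def)
  then have "XP (Suc n) \<alpha>' = P (Suc n) a + XP n \<alpha>" by (simp add: \<alpha>'_def)
  then have "x = XP (Suc n) \<alpha>' + sum_list (map (\<lambda>k. zz c (\<omega>' k) k) [1..<Suc n])"
    using ye yQ av by (simp add: \<omega>'_def)
  moreover have "\<forall>k\<in>{1..<Suc n}. \<omega>' k \<in> Hm (Suc n)"
    using om0 av S.NC_H by (simp add: \<omega>'_def)
  ultimately show ?case by blast
qed

lemma abs_concat: "abs_rfg (concat L) = sum_list (map abs_rfg L)"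
  by (induction L) (simp_all add: abs_Nil abs_append)

lemma abs_gpow_XP: "abs_rfg (concat (map (\<lambda>k. gpow k (\<alpha> k)) (rev [1..<Suc m]))) = XP m \<alpha>"
proof (induction m)
  case 0 then show ?case by (simp add: abs_Nil)
next
  case (Suc m)
  have "rev [1..<Suc (Suc m)] = Suc m # rev [1..<Suc m]" by simp
  then show ?case using Suc by (simp add: abs_append P_def)
qed

lemma abs_comm: "abs_rfg (comm u v) = cm (abs_rfg u) (abs_rfg v)"
  by (simp add: comm_def abs_append abs_inv cm_def add.assoc)

lemma alphabet_append[simp]: "alphabet m (u @ v) \<longleftrightarrow> alphabet m u \<and> alphabet m v"
  by (auto simp: alphabet_def)
lemma alphabet_inv[simp]: "alphabet m (inv_word u) \<longleftrightarrow> alphabet m u"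
  by (auto simp: alphabet_def inv_word_def)
lemma alphabet_gen: "1 \<le> k \<Longrightarrow> k \<le> m \<Longrightarrow> alphabet m (gen k)"
  by (auto simp: alphabet_def gen_def)
lemma alphabet_gpow: "1 \<le> k \<Longrightarrow> k \<le> m \<Longrightarrow> alphabet m (gpow k a)"
  by (auto simp: alphabet_def gpow_def)
lemma alphabet_concat: "(\<And>w. w \<in> set L \<Longrightarrow> alphabet m w) \<Longrightarrow> alphabet m (concat L)"
  by (induction L) (auto simp: alphabet_def)

theorem theorem4p1:
  fixes m :: nat and x :: word and c :: "nat \<Rightarrow> bool"
  assumes "1 \<le> m" and "alphabet m x"
  shows "\<exists>(\<alpha> :: nat \<Rightarrow> int) (\<omega> :: nat \<Rightarrow> word).
           (\<forall>k \<in> {1..<m}. alphabet m (\<omega> k)) \<and>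
           rf_eq m x
             (concat (map (\<lambda>k. gpow k (\<alpha> k)) (rev [1..<Suc m])) @
              concat (map (\<lambda>k. if c k then comm (\<omega> k) (gen k) else comm (gen k) (\<omega> k))
                          [1..<m]))"
proof -
  have xH: "abs_rfg x \<in> Hm m" unfolding Hm_def using assms(2) by blast
  obtain \<alpha> \<omega> where om: "\<forall>k\<in>{1..<m}. \<omega> k \<in> Hm m"
    and eq: "abs_rfg x = XP m \<alpha> + sum_list (map (\<lambda>k. zz c (\<omega> k) k) [1..<m])"
    using main_grp[OF xH, of c] by blast
  define \<omega>w where "\<omega>w k = (SOME w. alphabet m w \<and> abs_rfg w = \<omega> k)" for k
  have \<omega>w: "alphabet m (\<omega>w k) \<and> abs_rfg (\<omega>w k) = \<omega> k" if "k \<in> {1..<m}" for k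
  proof -
    have "\<omega> k \<in> abs_rfg ` {w. alphabet m w}" using om that by (simp add: Hm_def)
    then obtain w where w: "w \<in> {w. alphabet m w}" "\<omega> k = abs_rfg w" by (rule imageE)
    then have "alphabet m w \<and> abs_rfg w = \<omega> k" by simp
    then show ?thesis unfolding \<omega>w_def by (rule someI[where x=w])
  qed
  define W where "W = concat (map (\<lambda>k. gpow k (\<alpha> k)) (rev [1..<Suc m])) @
              concat (map (\<lambda>k. if c k then comm (\<omega>w k) (gen k) else comm (gen k) (\<omega>w k)) [1..<m])"
  have "map abs_rfg (map (\<lambda>k. if c k then comm (\<omega>w k) (gen k) else comm (gen k) (\<omega>w k)) [1..<m])
        = map (\<lambda>k. zz c (\<omega> k) k) [1..<m]"
    using \<omega>w by (auto simp: zz_def abs_comm X_def)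
  then have absW: "abs_rfg W = abs_rfg x"
    unfolding W_def eq abs_append abs_gpow_XP abs_concat[of "map (\<lambda>k. if c k then comm (\<omega>w k) (gen k) else comm (gen k) (\<omega>w k)) [1..<m]"]
    by (simp only:)
  have alphW: "alphabet m W"
  proof -
    have 1: "alphabet m (concat (map (\<lambda>k. gpow k (\<alpha> k)) (rev [1..<Suc m])))"
      by (rule alphabet_concat) (auto intro!: alphabet_gpow)
    have 2: "alphabet m (concat (map (\<lambda>k. if c k then comm (\<omega>w k) (gen k) else comm (gen k) (\<omega>w k)) [1..<m]))"
    proof (rule alphabet_concat)
      fix w assume "w \<in> set (map (\<lambda>k. if c k then comm (\<omega>w k) (gen k) else comm (gen k) (\<omega>w k)) [1..<m])"
      then obtain k where k: "k \<in> {1..<m}" "w = (if c k then comm (\<omega>w k) (gen k) else comm (gen k) (\<omega>w k))"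
        by auto
      have "alphabet m (\<omega>w k)" "alphabet m (gen k)" using \<omega>w[OF k(1)] k(1) alphabet_gen[of k m] by auto
      then show "alphabet m w" using k(2) by (simp add: comm_def)
    qed
    show ?thesis unfolding W_def using 1 2 by simp
  qed
  have "rfx W x" using absW by (simp only: rfg.abs_eq_iff)
  then have "rfx x W" by (rule x_sym)
  then have "rf_eq m (delm m x) (delm m W)" by (rule rfx_retract)
  then have "rf_eq m x W" using delm_id[OF assms(2)] delm_id[OF alphW] by simp
  moreover have "\<forall>k\<in>{1..<m}. alphabet m (\<omega>w k)" using \<omega>w by blast
  ultimately show ?thesis unfolding W_def by blast
qed

end
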